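(* Let $1\le p<\infty$ and let $d_{w,p}$ be a Lorentz sequence space. The norm closure $\overline{J^{\ell_p}}$ of the set $J^{\ell_p}$ of operators in $L(d_{w,p})$ factoring through $\ell_p$ properly contains the ideal $\mathcal K(d_{w,p})$ of compact operators on $d_{w,p}$.
   Context: Let $1\le p<\infty$ and let $w=(w_n)$ be a real sequence with $w_1=1$, $w_n\downarrow 0$ and $\sum_n w_n=\infty$. The Lorentz sequence space $d_{w,p}$ is the Banach space of all $x=(x_n)\in c_0$ with $\|x\|_{d_{w,p}}=\big(\sum_{n}w_n (x^*_n)^p\big)^{1/p}<\infty$, where $(x^*_n)$ is the non-increasing rearrangement of $(|x_n|)$. An operator $T\in L(d_{w,p})$ factors through $\ell_p$ if $T=BA$ for some $A\in L(d_{w,p},\ell_p)$, $B\in L(\ell_p,d_{w,p})$; $J^{\ell_p}$ denotes the set of such operators. *)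

theory Defs
  imports "HOL-Analysis.Analysis"
begin

text \<open>Sequences are functions nat => real, indexed from 0 (so index n here
  corresponds to index n+1 in the paper).\<close>

text \<open>Non-increasing rearrangement of (|x n|): for x in c_0,
  dec_rearr x n is the (n+1)-st largest value of |x k| (with multiplicity).\<close>
definition dec_rearr :: "(nat \<Rightarrow> real) \<Rightarrow> nat \<Rightarrow> real" where
  "dec_rearr x n = Inf {s. 0 \<le> s \<and> finite {k. s < \<bar>x k\<bar>} \<and> card {k. s < \<bar>x k\<bar>} \<le> n}"

definition lorentz_space :: "(nat \<Rightarrow> real) \<Rightarrow> real \<Rightarrow> (nat \<Rightarrow> real) set" where
  "lorentz_space w p = {x. x \<longlonglongrightarrow> 0 \<and> summable (\<lambda>n. w n * dec_rearr x n powr p)}"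

definition lorentz_norm :: "(nat \<Rightarrow> real) \<Rightarrow> real \<Rightarrow> (nat \<Rightarrow> real) \<Rightarrow> real" where
  "lorentz_norm w p x = (\<Sum>n. w n * dec_rearr x n powr p) powr (1 / p)"

definition lp_space :: "real \<Rightarrow> (nat \<Rightarrow> real) set" where
  "lp_space p = {x. summable (\<lambda>n. \<bar>x n\<bar> powr p)}"

definition lp_norm :: "real \<Rightarrow> (nat \<Rightarrow> real) \<Rightarrow> real" where
  "lp_norm p x = (\<Sum>n. \<bar>x n\<bar> powr p) powr (1 / p)"

text \<open>Bounded linear operators between (subspaces X, Y with norms nX, nY);
  only the values on X matter.\<close>
definition bdd_lin_op ::
  "(nat \<Rightarrow> real) set \<Rightarrow> ((nat \<Rightarrow> real) \<Rightarrow> real) \<Rightarrow> (nat \<Rightarrow> real) set \<Rightarrow> ((nat \<Rightarrow> real) \<Rightarrow> real) \<Rightarrow> ((nat \<Rightarrow> real) \<Rightarrow> (nat \<Rightarrow> real)) \<Rightarrow> bool" where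
  "bdd_lin_op X nX Y nY T \<longleftrightarrow>
     (\<forall>x\<in>X. T x \<in> Y) \<and>
     (\<forall>x\<in>X. \<forall>y\<in>X. T (\<lambda>n. x n + y n) = (\<lambda>n. T x n + T y n)) \<and>
     (\<forall>x\<in>X. \<forall>c. T (\<lambda>n. c * x n) = (\<lambda>n. c * T x n)) \<and>
     (\<exists>C. \<forall>x\<in>X. nY (T x) \<le> C * nX x)"

definition lorentz_op :: "(nat \<Rightarrow> real) \<Rightarrow> real \<Rightarrow> ((nat \<Rightarrow> real) \<Rightarrow> (nat \<Rightarrow> real)) \<Rightarrow> bool" where
  "lorentz_op w p T \<longleftrightarrow>
     bdd_lin_op (lorentz_space w p) (lorentz_norm w p) (lorentz_space w p) (lorentz_norm w p) T"

definition lorentz_opnorm :: "(nat \<Rightarrow> real) \<Rightarrow> real \<Rightarrow> ((nat \<Rightarrow> real) \<Rightarrow> (nat \<Rightarrow> real)) \<Rightarrow> real" where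
  "lorentz_opnorm w p T =
     (SUP x\<in>{x\<in>lorentz_space w p. lorentz_norm w p x \<le> 1}. lorentz_norm w p (T x))"

definition factors_through_lp :: "(nat \<Rightarrow> real) \<Rightarrow> real \<Rightarrow> ((nat \<Rightarrow> real) \<Rightarrow> (nat \<Rightarrow> real)) \<Rightarrow> bool" where
  "factors_through_lp w p T \<longleftrightarrow> lorentz_op w p T \<and>
     (\<exists>A B. bdd_lin_op (lorentz_space w p) (lorentz_norm w p) (lp_space p) (lp_norm p) A \<and>
            bdd_lin_op (lp_space p) (lp_norm p) (lorentz_space w p) (lorentz_norm w p) B \<and>
            (\<forall>x\<in>lorentz_space w p. T x = B (A x)))"

definition in_closure_J_lp :: "(nat \<Rightarrow> real) \<Rightarrow> real \<Rightarrow> ((nat \<Rightarrow> real) \<Rightarrow> (nat \<Rightarrow> real)) \<Rightarrow> bool" where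
  "in_closure_J_lp w p T \<longleftrightarrow> lorentz_op w p T \<and>
     (\<forall>e>0. \<exists>S. factors_through_lp w p S \<and> lorentz_opnorm w p (\<lambda>x n. T x n - S x n) < e)"

definition compact_lorentz_op :: "(nat \<Rightarrow> real) \<Rightarrow> real \<Rightarrow> ((nat \<Rightarrow> real) \<Rightarrow> (nat \<Rightarrow> real)) \<Rightarrow> bool" where
  "compact_lorentz_op w p T \<longleftrightarrow> lorentz_op w p T \<and>
     (\<forall>xs :: nat \<Rightarrow> nat \<Rightarrow> real. (\<forall>n. xs n \<in> lorentz_space w p) \<and> (\<exists>M. \<forall>n. lorentz_norm w p (xs n) \<le> M) \<longrightarrow>
        (\<exists>r y. strict_mono r \<and> y \<in> lorentz_space w p \<and>
           (\<lambda>n. lorentz_norm w p (\<lambda>k. T (xs (r n)) k - y k)) \<longlonglongrightarrow> 0))"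

end

theory Submission
  imports Defs
begin

definition adm :: "(nat \<Rightarrow> real) \<Rightarrow> nat \<Rightarrow> real \<Rightarrow> bool" where
  "adm x n s \<longleftrightarrow> 0 \<le> s \<and> finite {k. s < \<bar>x k\<bar>} \<and> card {k. s < \<bar>x k\<bar>} \<le> n"

lemma dec_rearr_adm: "dec_rearr x n = Inf (Collect (adm x n))"
  unfolding dec_rearr_def adm_def by simp

definition bdd :: "(nat \<Rightarrow> real) \<Rightarrow> bool" where
  "bdd x \<longleftrightarrow> (\<exists>B. \<forall>k. \<bar>x k\<bar> \<le> B)"

lemma adm_bound: "0 \<le> B \<Longrightarrow> (\<forall>k. \<bar>x k\<bar> \<le> B) \<Longrightarrow> adm x n B"
  unfolding adm_def by (auto simp: not_less[symmetric])

lemma adm_ne: "bdd x \<Longrightarrow> Collect (adm x n) \<noteq> {}"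
proof -
  assume "bdd x" then obtain B where B: "\<forall>k. \<bar>x k\<bar> \<le> B" unfolding bdd_def by blast
  have "0 \<le> B" using B[rule_format, of 0] by simp
  then have "adm x n B" using B adm_bound by blast
  then show ?thesis by blast
qed

lemma dr_le: "adm x n s \<Longrightarrow> dec_rearr x n \<le> s"
  unfolding dec_rearr_adm
  by (rule cInf_lower) (auto simp: adm_def bdd_below_def)

lemma dr_ge: "bdd x \<Longrightarrow> (\<And>s. adm x n s \<Longrightarrow> v \<le> s) \<Longrightarrow> v \<le> dec_rearr x n"
  unfolding dec_rearr_adm
  by (rule cInf_greatest) (auto dest: adm_ne)

lemma dr_nonneg: "bdd x \<Longrightarrow> 0 \<le> dec_rearr x n"
  by (rule dr_ge) (auto simp: adm_def)

lemma dr_bound: "0 \<le> B \<Longrightarrow> (\<forall>k. \<bar>x k\<bar> \<le> B) \<Longrightarrow> dec_rearr x n \<le> B"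
  by (rule dr_le, rule adm_bound)

lemma conv_bdd: "x \<longlonglongrightarrow> 0 \<Longrightarrow> bdd x"
proof -
  assume "x \<longlonglongrightarrow> 0"
  then have "Bseq x" by (rule convergent_imp_Bseq[OF convergentI])
  then show ?thesis unfolding bdd_def Bseq_def by (auto intro: less_imp_le)
qed

lemma dr_coord: "bdd x \<Longrightarrow> \<bar>x k\<bar> \<le> dec_rearr x 0"
proof (rule dr_ge)
  fix s assume "adm x 0 s"
  then have "{k. s < \<bar>x k\<bar>} = {}" unfolding adm_def by auto
  then show "\<bar>x k\<bar> \<le> s" by (metis (mono_tags) empty_iff mem_Collect_eq not_less)
qed

lemma bdd_mono: "(\<forall>k. \<bar>u k\<bar> \<le> \<bar>v k\<bar>) \<Longrightarrow> bdd v \<Longrightarrow> bdd u"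
  unfolding bdd_def by (meson order_trans)

lemma dr_mono: fixes u v :: "nat \<Rightarrow> real"
  assumes "\<forall>k. \<bar>u k\<bar> \<le> \<bar>v k\<bar>" "bdd v" shows "dec_rearr u n \<le> dec_rearr v n"
proof -
  have bu: "bdd u" using assms bdd_mono by blast
  have "dec_rearr u n \<le> s" if a: "adm v n s" for s
  proof -
    have sub: "{k. s < \<bar>u k\<bar>} \<subseteq> {k. s < \<bar>v k\<bar>}" using assms(1) by (auto intro: less_le_trans)
    have "adm u n s" using a sub unfolding adm_def by (meson card_mono finite_subset order_trans)
    then show "dec_rearr u n \<le> s" by (rule dr_le)
  qed
  then show ?thesis using dr_ge[OF assms(2)] by blast
qed

lemma dr_quasi:
  assumes "\<forall>k. \<bar>c k\<bar> \<le> \<bar>a k\<bar> + \<bar>b k\<bar>" "bdd a" "bdd b"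
  shows "dec_rearr c n \<le> dec_rearr a (n div 2) + dec_rearr b (n div 2)"
proof -
  let ?m = "n div 2"
  have key: "dec_rearr c n \<le> s + t" if sa: "adm a ?m s" and tb: "adm b ?m t" for s t
  proof (rule dr_le)
    have sub: "{k. s + t < \<bar>c k\<bar>} \<subseteq> {k. s < \<bar>a k\<bar>} \<union> {k. t < \<bar>b k\<bar>}"
    proof
      fix k assume "k \<in> {k. s + t < \<bar>c k\<bar>}"
      then have "s + t < \<bar>a k\<bar> + \<bar>b k\<bar>" using assms(1) by (smt (verit) mem_Collect_eq)
      then show "k \<in> {k. s < \<bar>a k\<bar>} \<union> {k. t < \<bar>b k\<bar>}" by (smt (verit) UnI1 UnI2 mem_Collect_eq)
    qed
    have fin: "finite ({k. s < \<bar>a k\<bar>} \<union> {k. t < \<bar>b k\<bar>})" using sa tb unfolding adm_def by auto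
    have "card ({k. s < \<bar>a k\<bar>} \<union> {k. t < \<bar>b k\<bar>}) \<le> ?m + ?m"
      using sa tb unfolding adm_def by (meson add_mono card_Un_le order_trans)
    then have "card {k. s + t < \<bar>c k\<bar>} \<le> n" using card_mono[OF fin sub] by linarith
    then show "adm c n (s + t)" using sa tb finite_subset[OF sub fin] unfolding adm_def by auto
  qed
  have "dec_rearr c n - t \<le> dec_rearr a ?m" if tb: "adm b ?m t" for t
    using key[OF _ tb] by (intro dr_ge[OF assms(2)]) force
  then have "dec_rearr c n - dec_rearr a ?m \<le> dec_rearr b ?m"
    by (intro dr_ge[OF assms(3)]) force
  then show ?thesis by simp
qed

lemma dr_topF:
  assumes "bdd x" "finite F" "F \<noteq> {}" "\<forall>k\<in>F. v \<le> \<bar>x k\<bar>"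
  shows "v \<le> dec_rearr x (card F - 1)"
proof (rule dr_ge[OF assms(1)])
  fix s assume a: "adm x (card F - 1) s"
  show "v \<le> s"
  proof (rule ccontr)
    assume "\<not> v \<le> s"
    then have "F \<subseteq> {k. s < \<bar>x k\<bar>}" using assms(4) by force
    then have "card F \<le> card {k. s < \<bar>x k\<bar>}" using a unfolding adm_def by (simp add: card_mono)
    moreover have "card F > 0" using assms(2,3) by (simp add: card_gt_0_iff)
    ultimately show False using a unfolding adm_def by linarith
  qed
qed

lemma dr_top:
  fixes x :: "nat \<Rightarrow> real"
  assumes "bdd x" "0 \<le> p"
  shows "finite F \<Longrightarrow> (\<Sum>k\<in>F. \<bar>x k\<bar> powr p) \<le> (\<Sum>n<card F. dec_rearr x n powr p)"
proof (induct "card F" arbitrary: F)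
  case 0
  then show ?case by simp
next
  case (Suc N)
  then have ne: "F \<noteq> {}" by auto
  define m where "m = Min ((\<lambda>k. \<bar>x k\<bar>) ` F)"
  have "m \<in> (\<lambda>k. \<bar>x k\<bar>) ` F" unfolding m_def using Suc ne by (intro Min_in) auto
  then obtain k0 where k0: "k0 \<in> F" "\<bar>x k0\<bar> = m" by auto
  have mle: "\<forall>k\<in>F. \<bar>x k0\<bar> \<le> \<bar>x k\<bar>" using k0 Suc(3) unfolding m_def by auto
  have c1: "N = card (F - {k0})" using Suc k0 by simp
  have ih: "(\<Sum>k\<in>F - {k0}. \<bar>x k\<bar> powr p) \<le> (\<Sum>n<N. dec_rearr x n powr p)"
    using Suc(1)[OF c1] Suc(3) c1 by simp
  have "\<bar>x k0\<bar> \<le> dec_rearr x (card F - 1)" using dr_topF[OF assms(1) Suc(3) ne mle] .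
  then have "\<bar>x k0\<bar> \<le> dec_rearr x N" using Suc(2) by (metis diff_Suc_1)
  then have t: "\<bar>x k0\<bar> powr p \<le> dec_rearr x N powr p" using assms(2) by (simp add: powr_mono2)
  have "(\<Sum>k\<in>F. \<bar>x k\<bar> powr p) = (\<Sum>k\<in>F - {k0}. \<bar>x k\<bar> powr p) + \<bar>x k0\<bar> powr p"
    using Suc(3) k0 by (simp add: sum.remove add.commute)
  also have "\<dots> \<le> (\<Sum>n<N. dec_rearr x n powr p) + dec_rearr x N powr p" using ih t by linarith
  also have "\<dots> = (\<Sum>n<card F. dec_rearr x n powr p)" using Suc(2)[symmetric] by simp
  finally show ?case .
qed

lemma c0_finite_level:
  fixes x :: "nat \<Rightarrow> real"
  assumes "x \<longlonglongrightarrow> 0" "0 < e"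
  shows "finite {k. e < \<bar>x k\<bar>}"
proof -
  obtain N where N: "\<forall>k\<ge>N. norm (x k - 0) < e" using LIMSEQ_D[OF assms] by blast
  have "{k. e < \<bar>x k\<bar>} \<subseteq> {..<N}" using N by (force simp: not_less[symmetric])
  then show ?thesis using finite_subset by blast
qed

lemma dr_attain:
  fixes x :: "nat \<Rightarrow> real"
  assumes x0: "x \<longlonglongrightarrow> 0" and cpos: "0 < dec_rearr x n"
  shows "finite {k. dec_rearr x n \<le> \<bar>x k\<bar>} \<and> n + 1 \<le> card {k. dec_rearr x n \<le> \<bar>x k\<bar>}"
proof -
  define c where "c = dec_rearr x n"
  have c: "0 < c" using cpos c_def by simp
  define E where "E = {k. c/2 < \<bar>x k\<bar>}"
  have finE: "finite E" unfolding E_def using c0_finite_level[OF x0, of "c/2"] c by simp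
  define G where "G = {k. c \<le> \<bar>x k\<bar>}"
  have GE: "G \<subseteq> E" unfolding G_def E_def using c by auto
  have finG: "finite G" using finite_subset[OF GE finE] .
  have "n + 1 \<le> card G"
  proof (rule ccontr)
    assume "\<not> n + 1 \<le> card G"
    then have cG: "card G \<le> n" by simp
    define V where "V = insert (c/2) ((\<lambda>k. \<bar>x k\<bar>) ` {k\<in>E. \<bar>x k\<bar> < c})"
    have finV: "finite V" unfolding V_def using finE by simp
    define s where "s = Max V"
    have sV: "s \<in> V" unfolding s_def using finV by (intro Max_in) (auto simp: V_def)
    have s_lt: "s < c" using sV c unfolding V_def by auto
    have s_ge: "c/2 \<le> s" unfolding s_def using finV by (intro Max_ge) (auto simp: V_def)
    have eq: "{k. s < \<bar>x k\<bar>} = G"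
    proof
      show "G \<subseteq> {k. s < \<bar>x k\<bar>}" unfolding G_def using s_lt by auto
      show "{k. s < \<bar>x k\<bar>} \<subseteq> G"
      proof
        fix k assume k: "k \<in> {k. s < \<bar>x k\<bar>}"
        then have kE: "k \<in> E" unfolding E_def using s_ge by auto
        show "k \<in> G"
        proof (rule ccontr)
          assume "k \<notin> G"
          then have "\<bar>x k\<bar> < c" unfolding G_def by auto
          then have "\<bar>x k\<bar> \<in> V" unfolding V_def using kE by auto
          then have "\<bar>x k\<bar> \<le> s" unfolding s_def using finV by (intro Max_ge)
          then show False using k by auto
        qed
      qed
    qed
    have "adm x n s" unfolding adm_def eq using finG cG s_ge c by auto
    then have "c \<le> s" unfolding c_def by (rule dr_le)
    then show False using s_lt by simp
  qed
  then show ?thesis using finG unfolding G_def c_def by simp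
qed

lemma dr_topsum:
  fixes x :: "nat \<Rightarrow> real"
  assumes x0: "x \<longlonglongrightarrow> 0" and p: "0 < p"
  shows "\<exists>F. finite F \<and> card F = N \<and> (\<Sum>n<N. dec_rearr x n powr p) \<le> (\<Sum>k\<in>F. \<bar>x k\<bar> powr p)"
proof (induct N)
  case 0
  then show ?case by (intro exI[of _ "{}"]) simp
next
  case (Suc N)
  then obtain F where F: "finite F" "card F = N" "(\<Sum>n<N. dec_rearr x n powr p) \<le> (\<Sum>k\<in>F. \<bar>x k\<bar> powr p)"
    by blast
  have bx: "bdd x" using conv_bdd[OF x0] .
  have "\<exists>k. k \<notin> F \<and> dec_rearr x N \<le> \<bar>x k\<bar>"
  proof (cases "dec_rearr x N = 0")
    case True
    then show ?thesis using ex_new_if_finite[OF infinite_UNIV_nat F(1)] by auto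
  next
    case False
    then have pos: "0 < dec_rearr x N" using dr_nonneg[OF bx, of N] by simp
    from dr_attain[OF x0 pos] have fG: "finite {k. dec_rearr x N \<le> \<bar>x k\<bar>}"
      and cG: "N + 1 \<le> card {k. dec_rearr x N \<le> \<bar>x k\<bar>}" by auto
    show ?thesis
    proof (rule ccontr)
      assume "\<not> ?thesis"
      then have "{k. dec_rearr x N \<le> \<bar>x k\<bar>} \<subseteq> F" by auto
      then have "card {k. dec_rearr x N \<le> \<bar>x k\<bar>} \<le> N" using card_mono[OF F(1)] F(2) by auto
      then show False using cG by simp
    qed
  qed
  then obtain k where k: "k \<notin> F" "dec_rearr x N \<le> \<bar>x k\<bar>" by blast
  have t: "dec_rearr x N powr p \<le> \<bar>x k\<bar> powr p" using k(2) dr_nonneg[OF bx] p by (simp add: powr_mono2)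
  show ?case
  proof (intro exI[of _ "insert k F"] conjI)
    show "finite (insert k F)" using F by simp
    show "card (insert k F) = Suc N" using F k by simp
    show "(\<Sum>n<Suc N. dec_rearr x n powr p) \<le> (\<Sum>k\<in>insert k F. \<bar>x k\<bar> powr p)"
      using F k t by simp
  qed
qed

definition Qf :: "(nat \<Rightarrow> real) \<Rightarrow> real \<Rightarrow> (nat \<Rightarrow> real) \<Rightarrow> real" where
  "Qf w p x = (\<Sum>n. w n * dec_rearr x n powr p)"

lemma norm_Qf: "lorentz_norm w p x = Qf w p x powr (1/p)"
  unfolding lorentz_norm_def Qf_def by simp

lemma sum_div2: fixes g :: "nat \<Rightarrow> real" assumes "\<And>n. 0 \<le> g n"
  shows "(\<Sum>n<N. g (n div 2)) \<le> 2 * (\<Sum>m<N. g m)"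
proof -
  have eq: "(\<Sum>n<2*M. g (n div 2)) = 2 * (\<Sum>m<M. g m)" for M
  proof (induct M)
    case 0 then show ?case by simp
  next
    case (Suc M)
    have e1: "(2*M) div 2 = M" "(Suc (2*M)) div 2 = M" by auto
    have "(\<Sum>n<2*Suc M. g (n div 2)) = (\<Sum>n<2*M. g (n div 2)) + g ((2*M) div 2) + g (Suc (2*M) div 2)"
      by (simp add: numeral_2_eq_2)
    then have "(\<Sum>n<2*Suc M. g (n div 2)) = (\<Sum>n<2*M. g (n div 2)) + g M + g M" using e1 by simp
    then show ?case using Suc by simp
  qed
  have "(\<Sum>n<N. g (n div 2)) \<le> (\<Sum>n<2*N. g (n div 2))"
    by (rule sum_mono2) (auto intro: assms)
  then show ?thesis using eq[of N] by simp
qed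

lemma powr_sum_le: fixes s t p :: real assumes "0 \<le> s" "0 \<le> t" "0 \<le> p"
  shows "(s + t) powr p \<le> 2 powr p * (s powr p + t powr p)"
proof -
  have "(s + t) powr p \<le> (2 * max s t) powr p" using assms by (intro powr_mono2) auto
  also have "\<dots> = 2 powr p * max s t powr p" using assms by (simp add: powr_mult)
  also have "\<dots> \<le> 2 powr p * (s powr p + t powr p)"
    by (intro mult_left_mono) (auto simp: max_def)
  finally show ?thesis .
qed

locale wp =
  fixes w :: "nat \<Rightarrow> real" and p :: real
  assumes p1: "1 \<le> p" and w0: "w 0 = 1" and wdec: "decseq w" and wlim: "w \<longlonglongrightarrow> 0"
begin

lemma w_nonneg: "0 \<le> w n"
  using decseq_ge[OF wdec wlim] by simp

lemma w_le1: "w n \<le> 1"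
  using wdec w0 unfolding decseq_def by (metis le0)

lemma w_anti: "m \<le> n \<Longrightarrow> w n \<le> w m"
  using wdec unfolding decseq_def by blast

lemma ppos: "0 < p" using p1 by simp

lemma term_nonneg: "bdd x \<Longrightarrow> 0 \<le> w n * dec_rearr x n powr p"
  using w_nonneg by simp

lemma mem_d: "x \<in> lorentz_space w p \<longleftrightarrow> x \<longlonglongrightarrow> 0 \<and> summable (\<lambda>n. w n * dec_rearr x n powr p)"
  unfolding lorentz_space_def by simp

lemma Qf_nonneg: "x \<in> lorentz_space w p \<Longrightarrow> 0 \<le> Qf w p x"
  unfolding Qf_def mem_d using term_nonneg conv_bdd by (auto intro: suminf_nonneg)

lemma Q_mono:
  assumes v: "v \<in> lorentz_space w p" and u0: "u \<longlonglongrightarrow> 0" and le: "\<forall>k. \<bar>u k\<bar> \<le> \<bar>v k\<bar>"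
  shows "u \<in> lorentz_space w p \<and> Qf w p u \<le> Qf w p v"
proof -
  have bv: "bdd v" using v mem_d conv_bdd by blast
  have bu: "bdd u" using conv_bdd u0 by blast
  have tle: "w n * dec_rearr u n powr p \<le> w n * dec_rearr v n powr p" for n
    using dr_mono[OF le bv, of n] dr_nonneg[OF bu, of n] w_nonneg ppos
    by (intro mult_left_mono powr_mono2) auto
  have sv: "summable (\<lambda>n. w n * dec_rearr v n powr p)" using v mem_d by blast
  have su: "summable (\<lambda>n. w n * dec_rearr u n powr p)"
    by (rule summable_comparison_test'[OF sv, of 0]) (use tle term_nonneg[OF bu] in auto)
  show ?thesis using su u0 mem_d tle sv unfolding Qf_def by (auto intro: suminf_le)
qed

lemma Q_quasi:
  assumes a: "a \<in> lorentz_space w p" and b: "b \<in> lorentz_space w p" and c0: "c \<longlonglongrightarrow> 0"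
    and le: "\<forall>k. \<bar>c k\<bar> \<le> \<bar>a k\<bar> + \<bar>b k\<bar>"
  shows "c \<in> lorentz_space w p \<and> Qf w p c \<le> 2 * 2 powr p * (Qf w p a + Qf w p b)"
proof -
  have ba: "bdd a" and bb: "bdd b" using a b mem_d conv_bdd by blast+
  have bc: "bdd c" using conv_bdd c0 by blast
  define g where "g m = w m * (dec_rearr a m powr p + dec_rearr b m powr p)" for m
  have g0: "0 \<le> g m" for m unfolding g_def using w_nonneg by simp
  have sg: "summable g" unfolding g_def distrib_left
    using a b mem_d by (intro summable_add) auto
  have sumg: "suminf g = Qf w p a + Qf w p b" unfolding g_def distrib_left Qf_def
    using a b mem_d by (intro suminf_add[symmetric]) auto
  have tle: "w n * dec_rearr c n powr p \<le> 2 powr p * g (n div 2)" for n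
  proof -
    have "w n * dec_rearr c n powr p \<le> w (n div 2) * (dec_rearr a (n div 2) + dec_rearr b (n div 2)) powr p"
      using dr_quasi[OF le ba bb, of n] dr_nonneg[OF bc, of n] w_nonneg w_anti[of "n div 2" n] ppos
      by (intro mult_mono powr_mono2) auto
    also have "\<dots> \<le> w (n div 2) * (2 powr p * (dec_rearr a (n div 2) powr p + dec_rearr b (n div 2) powr p))"
      using w_nonneg dr_nonneg[OF ba] dr_nonneg[OF bb] ppos by (intro mult_left_mono powr_sum_le) auto
    finally show ?thesis unfolding g_def by (simp add: algebra_simps)
  qed
  have ps: "(\<Sum>n<N. w n * dec_rearr c n powr p) \<le> 2 * 2 powr p * (Qf w p a + Qf w p b)" for N
  proof -
    have "(\<Sum>n<N. w n * dec_rearr c n powr p) \<le> (\<Sum>n<N. 2 powr p * g (n div 2))"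
      by (rule sum_mono) (rule tle)
    also have "\<dots> = 2 powr p * (\<Sum>n<N. g (n div 2))" by (simp add: sum_distrib_left)
    also have "\<dots> \<le> 2 powr p * (2 * (\<Sum>m<N. g m))" by (intro mult_left_mono sum_div2 g0) simp
    also have "\<dots> \<le> 2 powr p * (2 * suminf g)"
      using sum_le_suminf[OF sg, of "{..<N}"] g0 by (intro mult_left_mono) auto
    finally show ?thesis using sumg by (simp add: algebra_simps)
  qed
  have sc: "summable (\<lambda>n. w n * dec_rearr c n powr p)"
    by (rule summableI_nonneg_bounded[OF _ ps]) (rule term_nonneg[OF bc])
  have "Qf w p c \<le> 2 * 2 powr p * (Qf w p a + Qf w p b)"
    unfolding Qf_def[of w p c] by (rule suminf_le_const[OF sc ps])
  then show ?thesis using sc c0 mem_d by blast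
qed

lemma Qf_zero: "(\<lambda>k. 0) \<in> lorentz_space w p \<and> Qf w p (\<lambda>k. 0) = 0"
proof -
  have "dec_rearr (\<lambda>k. 0) n = 0" for n
    using dr_bound[of 0 "\<lambda>k. 0" n] dr_nonneg[of "\<lambda>k. 0" n] by (auto simp: bdd_def)
  then show ?thesis unfolding mem_d Qf_def by simp
qed

lemma coord_le_Q: assumes "x \<in> lorentz_space w p" shows "\<bar>x k\<bar> powr p \<le> Qf w p x"
proof -
  have bx: "bdd x" using assms mem_d conv_bdd by blast
  have s: "summable (\<lambda>n. w n * dec_rearr x n powr p)" using assms mem_d by blast
  have "\<bar>x k\<bar> powr p \<le> dec_rearr x 0 powr p" using dr_coord[OF bx] ppos by (simp add: powr_mono2)
  also have "\<dots> = (\<Sum>n\<in>{0}. w n * dec_rearr x n powr p)" using w0 by simp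
  also have "\<dots> \<le> Qf w p x" unfolding Qf_def
    by (rule sum_le_suminf[OF s]) (auto intro: term_nonneg[OF bx])
  finally show ?thesis .
qed

lemma incl:
  assumes y: "summable (\<lambda>k. \<bar>y k\<bar> powr p)"
  shows "y \<in> lorentz_space w p \<and> Qf w p y \<le> (\<Sum>k. \<bar>y k\<bar> powr p)"
proof -
  have z: "(\<lambda>k. \<bar>y k\<bar> powr p) \<longlonglongrightarrow> 0" using summable_LIMSEQ_zero[OF y] .
  have y0: "y \<longlonglongrightarrow> 0"
  proof (rule LIMSEQ_I)
    fix r :: real assume r: "0 < r"
    have "0 < r powr p" using r by simp
    from LIMSEQ_D[OF z this] obtain N where N: "\<forall>k\<ge>N. norm (\<bar>y k\<bar> powr p - 0) < r powr p" by blast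
    have "norm (y k - 0) < r" if "k \<ge> N" for k
    proof -
      have "\<bar>y k\<bar> powr p < r powr p" using N that by auto
      show ?thesis
      proof (rule ccontr)
        assume "\<not> norm (y k - 0) < r"
        then have "r \<le> \<bar>y k\<bar>" by simp
        then have "r powr p \<le> \<bar>y k\<bar> powr p" using r ppos by (intro powr_mono2) auto
        then show False using \<open>\<bar>y k\<bar> powr p < r powr p\<close> by simp
      qed
    qed
    then show "\<exists>N. \<forall>k\<ge>N. norm (y k - 0) < r" by blast
  qed
  have by0: "bdd y" using conv_bdd[OF y0] .
  have ps: "(\<Sum>n<N. w n * dec_rearr y n powr p) \<le> (\<Sum>k. \<bar>y k\<bar> powr p)" for N
  proof -
    obtain F where F: "finite F" "card F = N" "(\<Sum>n<N. dec_rearr y n powr p) \<le> (\<Sum>k\<in>F. \<bar>y k\<bar> powr p)"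
      using dr_topsum[OF y0 ppos] by blast
    have "(\<Sum>n<N. w n * dec_rearr y n powr p) \<le> (\<Sum>n<N. dec_rearr y n powr p)"
      using w_le1 w_nonneg by (intro sum_mono mult_left_le_one_le) auto
    also have "\<dots> \<le> (\<Sum>k\<in>F. \<bar>y k\<bar> powr p)" by (rule F(3))
    also have "\<dots> \<le> (\<Sum>k. \<bar>y k\<bar> powr p)" by (rule sum_le_suminf[OF y F(1)]) simp
    finally show ?thesis .
  qed
  have sy: "summable (\<lambda>n. w n * dec_rearr y n powr p)"
    by (rule summableI_nonneg_bounded[OF _ ps]) (rule term_nonneg[OF by0])
  have "Qf w p y \<le> (\<Sum>k. \<bar>y k\<bar> powr p)" unfolding Qf_def by (rule suminf_le_const[OF sy ps])
  then show ?thesis using sy y0 mem_d by blast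
qed

end

lemma abel_cmp:
  fixes w a b :: "nat \<Rightarrow> real"
  assumes wn: "\<And>n. 0 \<le> w n" and wa: "\<And>n. w (Suc n) \<le> w n"
    and ab: "\<And>M. M \<le> N \<Longrightarrow> (\<Sum>n<M. a n) \<le> (\<Sum>n<M. b n)"
  shows "(\<Sum>n<N. w n * a n) \<le> (\<Sum>n<N. w n * b n)"
proof -
  define D where "D M = (\<Sum>n<M. b n - a n)" for M
  have id: "(\<Sum>n<K. w n * (b n - a n)) = w K * D K + (\<Sum>n<K. (w n - w (Suc n)) * D (Suc n))" for K
  proof (induct K)
    case 0 then show ?case by (simp add: D_def)
  next
    case (Suc K)
    have e: "D (Suc K) = D K + (b K - a K)" by (simp add: D_def)
    have "(\<Sum>n<Suc K. w n * (b n - a n)) = w K * D K + (\<Sum>n<K. (w n - w (Suc n)) * D (Suc n)) + w K * (b K - a K)"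
      using Suc by simp
    also have "\<dots> = w (Suc K) * D (Suc K) + (\<Sum>n<Suc K. (w n - w (Suc n)) * D (Suc n))"
      by (simp add: algebra_simps e)
    finally show ?case .
  qed
  have Dn: "M \<le> N \<Longrightarrow> 0 \<le> D M" for M using ab[of M] by (simp add: D_def sum_subtractf)
  have "0 \<le> w N * D N + (\<Sum>n<N. (w n - w (Suc n)) * D (Suc n))"
    using Dn wn wa by (intro add_nonneg_nonneg sum_nonneg mult_nonneg_nonneg) auto
  then have "0 \<le> (\<Sum>n<N. w n * (b n - a n))" using id by simp
  then show ?thesis by (simp add: algebra_simps sum_subtractf)
qed

context wp begin

lemma HL_fin:
  assumes "x \<longlonglongrightarrow> 0"
  shows "(\<Sum>n<N. w n * \<bar>x n\<bar> powr p) \<le> (\<Sum>n<N. w n * dec_rearr x n powr p)"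
proof (rule abel_cmp)
  show "0 \<le> w n" for n by (rule w_nonneg)
  show "w (Suc n) \<le> w n" for n by (rule w_anti) simp
  fix M
  show "(\<Sum>n<M. \<bar>x n\<bar> powr p) \<le> (\<Sum>n<M. dec_rearr x n powr p)"
    using dr_top[OF conv_bdd[OF assms], of p "{..<M}"] ppos by simp
qed

end

lemma powr_to0: fixes f :: "nat \<Rightarrow> real"
  assumes "f \<longlonglongrightarrow> 0" "\<And>n. 0 \<le> f n" "0 < q"
  shows "(\<lambda>n. f n powr q) \<longlonglongrightarrow> 0"
  by (rule tendsto_zero_powrI[OF assms(1) tendsto_const]) (use assms in auto)

lemma powr_convex0: fixes p :: real assumes "1 \<le> p" shows "convex_on {0..} (\<lambda>x. x powr p)"
proof (rule convex_onI)
  show "convex {0::real..}" by simp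
  fix t x y :: real assume t: "0 < t" "t < 1" and x: "x \<in> {0..}" and y: "y \<in> {0..}"
  have tp: "u powr p \<le> u" if "0 \<le> u" "u \<le> 1" for u :: real
    using powr_mono'[of 1 p u] that assms by simp
  show "((1 - t) *\<^sub>R x + t *\<^sub>R y) powr p \<le> (1 - t) * x powr p + t * y powr p"
  proof (cases "x = 0")
    case True
    have "(t * y) powr p = t powr p * y powr p" using t y by (simp add: powr_mult)
    also have "\<dots> \<le> t * y powr p" using tp[of t] t by (intro mult_right_mono) auto
    finally show ?thesis using True by simp
  next
    case xn: False
    show ?thesis
    proof (cases "y = 0")
      case True
      have "((1 - t) * x) powr p = (1 - t) powr p * x powr p" using t x by (simp add: powr_mult)
      also have "\<dots> \<le> (1 - t) * x powr p" using tp[of "1 - t"] t by (intro mult_right_mono) auto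
      finally show ?thesis using True by simp
    next
      case False
      then show ?thesis using xn x y t convex_onD[OF powr_convex[OF assms], of t x y] by auto
    qed
  qed
qed

lemma jensen_w:
  fixes w x :: "nat \<Rightarrow> real" and p :: real
  assumes p: "1 \<le> p" and R: "finite R" and wn: "\<And>n. 0 \<le> w n" and S: "0 < (\<Sum>n\<in>R. w n)"
  shows "(\<Sum>n\<in>R. w n * \<bar>x n\<bar>) powr p \<le> (\<Sum>n\<in>R. w n) powr (p - 1) * (\<Sum>n\<in>R. w n * \<bar>x n\<bar> powr p)"
proof -
  define S where "S = (\<Sum>n\<in>R. w n)"
  have Sp: "0 < S" using S S_def by simp
  have Rne: "R \<noteq> {}" using S by auto
  have a1: "(\<Sum>n\<in>R. w n / S) = 1" using Sp unfolding S_def by (simp add: sum_divide_distrib[symmetric])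
  have j: "(\<Sum>n\<in>R. (w n / S) *\<^sub>R \<bar>x n\<bar>) powr p \<le> (\<Sum>n\<in>R. (w n / S) * \<bar>x n\<bar> powr p)"
    by (rule convex_on_sum[OF R Rne powr_convex0[OF p] a1, of "\<lambda>n. \<bar>x n\<bar>"]) (use wn Sp in auto)
  have e1: "(\<Sum>n\<in>R. (w n / S) *\<^sub>R \<bar>x n\<bar>) = (\<Sum>n\<in>R. w n * \<bar>x n\<bar>) / S"
    by (simp add: sum_divide_distrib)
  have e2: "(\<Sum>n\<in>R. (w n / S) * \<bar>x n\<bar> powr p) = (\<Sum>n\<in>R. w n * \<bar>x n\<bar> powr p) / S"
    by (simp add: sum_divide_distrib)
  have nn: "0 \<le> (\<Sum>n\<in>R. w n * \<bar>x n\<bar>)" using wn by (simp add: sum_nonneg)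
  have "(\<Sum>n\<in>R. w n * \<bar>x n\<bar>) powr p = S powr p * ((\<Sum>n\<in>R. w n * \<bar>x n\<bar>) / S) powr p"
    using Sp nn by (simp add: powr_divide)
  also have "\<dots> \<le> S powr p * ((\<Sum>n\<in>R. w n * \<bar>x n\<bar> powr p) / S)"
    using j e1 e2 by (intro mult_left_mono) auto
  also have "\<dots> = S powr (p - 1) * (\<Sum>n\<in>R. w n * \<bar>x n\<bar> powr p)"
    using Sp by (simp add: powr_diff)
  finally show ?thesis unfolding S_def .
qed

definition Wsum :: "(nat \<Rightarrow> real) \<Rightarrow> nat \<Rightarrow> real" where
  "Wsum w m = (\<Sum>n<m. w n)"

primrec blk :: "(nat \<Rightarrow> real) \<Rightarrow> nat \<Rightarrow> nat" where
  "blk w 0 = 0"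
| "blk w (Suc j) = (SOME m. blk w j < m \<and> 2 * Wsum w (blk w j) \<le> Wsum w m)"

declare blk.simps(2)[simp del]

lemma sum_split_ivl: fixes f :: "nat \<Rightarrow> real" assumes "a \<le> b"
  shows "(\<Sum>n<b. f n) = (\<Sum>n<a. f n) + (\<Sum>n\<in>{a..<b}. f n)"
proof -
  have "{..<b} = {..<a} \<union> {a..<b}" using assms by auto
  moreover have "{..<a} \<inter> {a..<b} = {}" by auto
  ultimately show ?thesis by (simp add: sum.union_disjoint)
qed

locale wps = wp +
  assumes nsum: "\<not> summable w"
begin

lemma W_mono: "a \<le> b \<Longrightarrow> Wsum w a \<le> Wsum w b"
  unfolding Wsum_def using w_nonneg by (intro sum_mono2) auto

lemma W_unbdd: "\<exists>m. B \<le> Wsum w m"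
proof (rule ccontr)
  assume "\<not> ?thesis"
  then have "\<And>m. sum w {..<m} \<le> B" unfolding Wsum_def by (meson not_le less_imp_le)
  then have "summable w" using w_nonneg by (intro summableI_nonneg_bounded) auto
  then show False using nsum by simp
qed

lemma blk_step: "blk w j < blk w (Suc j) \<and> 2 * Wsum w (blk w j) \<le> Wsum w (blk w (Suc j))"
proof -
  obtain m where m: "2 * Wsum w (blk w j) \<le> Wsum w m" using W_unbdd by blast
  define m' where "m' = max m (Suc (blk w j))"
  have "blk w j < m' \<and> 2 * Wsum w (blk w j) \<le> Wsum w m'"
    using m W_mono[of m m'] unfolding m'_def by auto
  then have "\<exists>m. blk w j < m \<and> 2 * Wsum w (blk w j) \<le> Wsum w m" by blast
  then show ?thesis unfolding blk.simps(2) by (rule someI_ex)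
qed

lemma blk_mono: "strict_mono (blk w)"
  using blk_step by (simp add: strict_mono_Suc_iff)

definition Rb :: "nat \<Rightarrow> nat set" where "Rb j = {blk w j..<blk w (Suc j)}"
definition Sb :: "nat \<Rightarrow> real" where "Sb j = (\<Sum>n\<in>Rb j. w n)"
definition mb :: "nat \<Rightarrow> nat" where "mb j = blk w (Suc j) - blk w j"

lemma W1: "1 \<le> m \<Longrightarrow> 1 \<le> Wsum w m"
  using W_mono[of 1 m] w0 by (simp add: Wsum_def)

lemma Sb_eq: "Sb j = Wsum w (blk w (Suc j)) - Wsum w (blk w j)"
  using sum_split_ivl[of "blk w j" "blk w (Suc j)" w] blk_step[of j]
  unfolding Sb_def Rb_def Wsum_def by simp

lemma Sb_ge: "Wsum w (blk w (Suc j)) \<le> 2 * Sb j"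
  using Sb_eq blk_step[of j] by simp

lemma Sb_pos: "1/2 \<le> Sb j"
  using Sb_ge[of j] W1[of "blk w (Suc j)"] blk_step[of j] by simp

lemma Wmb: "1 \<le> Wsum w (mb j) \<and> Wsum w (mb j) \<le> 2 * Sb j"
  using W1[of "mb j"] W_mono[of "mb j" "blk w (Suc j)"] Sb_ge[of j] blk_step[of j]
  unfolding mb_def by auto

lemma Rb_disj: "i \<noteq> j \<Longrightarrow> Rb i \<inter> Rb j = {}"
proof -
  have "Rb i \<inter> Rb j = {}" if "i < j" for i j
  proof -
    have "blk w (Suc i) \<le> blk w j" using blk_mono that by (metis Suc_leI strict_mono_less_eq)
    then show ?thesis unfolding Rb_def by auto
  qed
  then show "i \<noteq> j \<Longrightarrow> Rb i \<inter> Rb j = {}" by (metis inf_commute nat_neq_iff)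
qed

lemma sum_blocks: fixes f :: "nat \<Rightarrow> real" shows "(\<Sum>j<J. \<Sum>n\<in>Rb j. f n) = (\<Sum>n<blk w J. f n)"
proof (induct J)
  case 0 then show ?case by simp
next
  case (Suc J)
  then show ?case using sum_split_ivl[of "blk w J" "blk w (Suc J)" f] blk_step[of J]
    unfolding Rb_def by simp
qed

definition psi :: "nat \<Rightarrow> (nat \<Rightarrow> real) \<Rightarrow> real" where
  "psi j x = Sb j powr (1/p - 1) * (\<Sum>n\<in>Rb j. w n * x n)"

lemma psi_bound: "\<bar>psi j x\<bar> powr p \<le> (\<Sum>n\<in>Rb j. w n * \<bar>x n\<bar> powr p)"
proof -
  define S where "S = Sb j"
  have Sp: "0 < S" using Sb_pos[of j] S_def by simp
  have fin: "finite (Rb j)" unfolding Rb_def by simp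
  have S': "0 < (\<Sum>n\<in>Rb j. w n)" using Sp unfolding S_def Sb_def .
  have t1: "\<bar>\<Sum>n\<in>Rb j. w n * x n\<bar> \<le> (\<Sum>n\<in>Rb j. w n * \<bar>x n\<bar>)"
    using sum_abs[of "\<lambda>n. w n * x n" "Rb j"] w_nonneg by (simp add: abs_mult)
  have "\<bar>psi j x\<bar> powr p = (S powr (1/p - 1) * \<bar>\<Sum>n\<in>Rb j. w n * x n\<bar>) powr p"
    unfolding psi_def S_def by (simp add: abs_mult)
  also have "\<dots> = S powr ((1/p - 1) * p) * \<bar>\<Sum>n\<in>Rb j. w n * x n\<bar> powr p"
    using Sp by (simp add: powr_mult powr_powr)
  also have "\<dots> \<le> S powr ((1/p - 1) * p) * (\<Sum>n\<in>Rb j. w n * \<bar>x n\<bar>) powr p"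
    using t1 ppos by (intro mult_left_mono powr_mono2) auto
  also have "\<dots> \<le> S powr ((1/p - 1) * p) * (S powr (p - 1) * (\<Sum>n\<in>Rb j. w n * \<bar>x n\<bar> powr p))"
    using jensen_w[OF p1 fin w_nonneg S', of x] unfolding S_def Sb_def by (intro mult_left_mono) auto
  also have "\<dots> = (\<Sum>n\<in>Rb j. w n * \<bar>x n\<bar> powr p)"
  proof -
    have "S powr ((1/p - 1) * p) * S powr (p - 1) = S powr 0"
      unfolding powr_add[symmetric] using ppos by (simp add: algebra_simps)
    then show ?thesis using Sp by (simp add: mult.assoc[symmetric])
  qed
  finally show ?thesis .
qed

lemma A_bound:
  assumes x: "x \<in> lorentz_space w p"
  shows "summable (\<lambda>j. \<bar>psi j x\<bar> powr p) \<and> (\<Sum>j. \<bar>psi j x\<bar> powr p) \<le> Qf w p x"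
proof -
  have x0: "x \<longlonglongrightarrow> 0" and sx: "summable (\<lambda>n. w n * dec_rearr x n powr p)" using x mem_d by auto
  have bx: "bdd x" using conv_bdd[OF x0] .
  have ps: "(\<Sum>j<J. \<bar>psi j x\<bar> powr p) \<le> Qf w p x" for J
  proof -
    have "(\<Sum>j<J. \<bar>psi j x\<bar> powr p) \<le> (\<Sum>j<J. \<Sum>n\<in>Rb j. w n * \<bar>x n\<bar> powr p)"
      by (intro sum_mono psi_bound)
    also have "\<dots> = (\<Sum>n<blk w J. w n * \<bar>x n\<bar> powr p)" by (rule sum_blocks)
    also have "\<dots> \<le> (\<Sum>n<blk w J. w n * dec_rearr x n powr p)" by (rule HL_fin[OF x0])
    also have "\<dots> \<le> Qf w p x" unfolding Qf_def
      by (rule sum_le_suminf[OF sx]) (auto intro: term_nonneg[OF bx])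
    finally show ?thesis .
  qed
  have s: "summable (\<lambda>j. \<bar>psi j x\<bar> powr p)" by (rule summableI_nonneg_bounded[OF _ ps]) simp
  show ?thesis using s suminf_le_const[OF s ps] by simp
qed

end

context wp begin

lemma Q_norm: "x \<in> lorentz_space w p \<Longrightarrow> Qf w p x = lorentz_norm w p x powr p"
  unfolding norm_Qf using Qf_nonneg ppos by (simp add: powr_powr powr_one)

lemma norm_from_Q: assumes "0 \<le> Qf w p x" "0 \<le> C" "Qf w p x \<le> C * Qf w p y" "0 \<le> Qf w p y"
  shows "lorentz_norm w p x \<le> C powr (1/p) * lorentz_norm w p y"
proof -
  have "lorentz_norm w p x \<le> (C * Qf w p y) powr (1/p)" unfolding norm_Qf
    using assms ppos by (intro powr_mono2) auto
  also have "\<dots> = C powr (1/p) * lorentz_norm w p y" unfolding norm_Qf using assms by (simp add: powr_mult)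
  finally show ?thesis .
qed

lemma norm_to0_Q: assumes "\<And>n. xs n \<in> lorentz_space w p" "(\<lambda>n. lorentz_norm w p (xs n)) \<longlonglongrightarrow> 0"
  shows "(\<lambda>n. Qf w p (xs n)) \<longlonglongrightarrow> 0"
proof -
  have "(\<lambda>n. lorentz_norm w p (xs n) powr p) \<longlonglongrightarrow> 0"
    by (rule powr_to0[OF assms(2)]) (auto simp: norm_Qf ppos)
  then show ?thesis using Q_norm assms(1) by simp
qed

lemma Q_to0_norm: assumes "\<And>n. xs n \<in> lorentz_space w p" "(\<lambda>n. Qf w p (xs n)) \<longlonglongrightarrow> 0"
  shows "(\<lambda>n. lorentz_norm w p (xs n)) \<longlonglongrightarrow> 0"
  unfolding norm_Qf by (rule powr_to0[OF assms(2)]) (use Qf_nonneg assms(1) ppos in auto)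

lemma diff_in: assumes "a \<in> lorentz_space w p" "b \<in> lorentz_space w p"
  shows "(\<lambda>k. a k - b k) \<in> lorentz_space w p"
proof -
  have "(\<lambda>k. a k - b k) \<longlonglongrightarrow> 0 - 0" using assms mem_d by (intro tendsto_diff) auto
  moreover have "\<forall>k. \<bar>a k - b k\<bar> \<le> \<bar>a k\<bar> + \<bar>b k\<bar>" by (simp add: abs_triangle_ineq4)
  ultimately show ?thesis using Q_quasi[OF assms, of "\<lambda>k. a k - b k"] by simp
qed

lemma opnorm_zero: "lorentz_opnorm w p (\<lambda>x n. 0) = 0"
proof -
  have ne: "{x \<in> lorentz_space w p. lorentz_norm w p x \<le> 1} \<noteq> {}"
    using Qf_zero by (intro ex_in_conv[THEN iffD1] exI[of _ "\<lambda>k. 0"]) (simp add: norm_Qf)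
  have "lorentz_norm w p (\<lambda>n. 0) = 0" using Qf_zero by (simp add: norm_Qf)
  then show ?thesis unfolding lorentz_opnorm_def using cSUP_const[OF ne] by simp
qed

lemma id_norm: "y \<in> lp_space p \<Longrightarrow> lorentz_norm w p y \<le> 1 * lp_norm p y"
  proof -
    assume y: "y \<in> lp_space p"
    have s: "summable (\<lambda>k. \<bar>y k\<bar> powr p)" using y unfolding lp_space_def by simp
    show ?thesis using incl[OF s] Qf_nonneg ppos unfolding norm_Qf lp_norm_def
      by (simp add: powr_mono2)
  qed

lemma id_in: "y \<in> lp_space p \<Longrightarrow> y \<in> lorentz_space w p"
  using incl unfolding lp_space_def by simp

lemma id_op: "bdd_lin_op (lp_space p) (lp_norm p) (lorentz_space w p) (lorentz_norm w p) (\<lambda>y. y)"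
  unfolding bdd_lin_op_def using id_in id_norm by blast

end

context wps begin

definition Tm :: "(nat \<Rightarrow> real) \<Rightarrow> nat \<Rightarrow> real" where "Tm x = (\<lambda>j. psi j x)"

lemma Tm_add: "Tm (\<lambda>n. x n + y n) = (\<lambda>n. Tm x n + Tm y n)"
  unfolding Tm_def psi_def by (simp add: algebra_simps sum.distrib)

lemma Tm_smult: "Tm (\<lambda>n. c * x n) = (\<lambda>n. c * Tm x n)"
  unfolding Tm_def psi_def by (simp add: algebra_simps sum_distrib_left)

lemma A_norm: "x \<in> lorentz_space w p \<Longrightarrow> lp_norm p (Tm x) \<le> 1 * lorentz_norm w p x"
proof -
  assume x: "x \<in> lorentz_space w p"
  have "0 \<le> (\<Sum>j. \<bar>psi j x\<bar> powr p)" using A_bound[OF x] by (simp add: suminf_nonneg)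
  then have "(\<Sum>j. \<bar>psi j x\<bar> powr p) powr (1/p) \<le> Qf w p x powr (1/p)"
    using A_bound[OF x] ppos by (intro powr_mono2) auto
  then show ?thesis unfolding lp_norm_def norm_Qf Tm_def by simp
qed

lemma A_in: "x \<in> lorentz_space w p \<Longrightarrow> Tm x \<in> lp_space p"
  using A_bound unfolding lp_space_def Tm_def by simp

lemma A_op: "bdd_lin_op (lorentz_space w p) (lorentz_norm w p) (lp_space p) (lp_norm p) Tm"
  unfolding bdd_lin_op_def using Tm_add Tm_smult A_norm A_in by blast

lemma T_op: "lorentz_op w p Tm"
proof -
  have "Tm x \<in> lorentz_space w p \<and> lorentz_norm w p (Tm x) \<le> 1 * lorentz_norm w p x"
    if x: "x \<in> lorentz_space w p" for x
  proof -
    have a: "Tm x \<in> lp_space p" "lp_norm p (Tm x) \<le> 1 * lorentz_norm w p x"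
      using A_in A_norm x by auto
    then have "Tm x \<in> lorentz_space w p" "lorentz_norm w p (Tm x) \<le> 1 * lp_norm p (Tm x)"
      using id_in id_norm by auto
    then show ?thesis using a by simp
  qed
  then show ?thesis unfolding lorentz_op_def bdd_lin_op_def using Tm_add Tm_smult by blast
qed

lemma T_factors: "factors_through_lp w p Tm"
  unfolding factors_through_lp_def using T_op A_op id_op by blast

lemma T_closure: "in_closure_J_lp w p Tm"
  unfolding in_closure_J_lp_def using T_op T_factors opnorm_zero by force

definition cu :: "nat \<Rightarrow> real" where "cu j = Wsum w (mb j) powr (-1/p)"
definition u :: "nat \<Rightarrow> nat \<Rightarrow> real" where "u j = (\<lambda>n. if n \<in> Rb j then cu j else 0)"

lemma cu_pos: "0 < cu j" unfolding cu_def using Wmb[of j] by simp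

lemma card_Rb: "card (Rb j) = mb j" unfolding Rb_def mb_def by simp

lemma u_in: "u j \<in> lorentz_space w p \<and> Qf w p (u j) \<le> 1"
proof -
  have u0: "u j \<longlonglongrightarrow> 0"
  proof (rule tendsto_eventually)
    show "\<forall>\<^sub>F n in sequentially. u j n = 0" unfolding eventually_sequentially u_def Rb_def
      by (intro exI[of _ "blk w (Suc j)"]) auto
  qed
  have bu: "bdd (u j)" using conv_bdd[OF u0] .
  have le: "dec_rearr (u j) n \<le> cu j" for n
    using cu_pos[of j] by (intro dr_bound) (auto simp: u_def)
  have z: "dec_rearr (u j) n = 0" if "mb j \<le> n" for n
  proof -
    have "{k. 0 < \<bar>u j k\<bar>} \<subseteq> Rb j" unfolding u_def by (auto split: if_splits)
    moreover have "finite (Rb j)" unfolding Rb_def by simp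
    moreover note sub = calculation
    have "card {k. 0 < \<bar>u j k\<bar>} \<le> n" using card_mono[OF sub(2) sub(1)] card_Rb[of j] that by simp
    then have "adm (u j) n 0" unfolding adm_def using sub finite_subset by blast
    then show ?thesis using dr_le dr_nonneg[OF bu] by (meson order_antisym)
  qed
  have ps: "(\<Sum>n<N. w n * dec_rearr (u j) n powr p) \<le> 1" for N
  proof -
    have "(\<Sum>n<N. w n * dec_rearr (u j) n powr p) \<le> (\<Sum>n<N. if n < mb j then w n * cu j powr p else 0)"
      using le z dr_nonneg[OF bu] w_nonneg ppos by (intro sum_mono) (auto intro!: mult_left_mono powr_mono2)
    also have "\<dots> = (\<Sum>n\<in>{..<N} \<inter> {n. n < mb j}. w n * cu j powr p)" by (simp add: sum.If_cases)
    also have "\<dots> \<le> (\<Sum>n<mb j. w n * cu j powr p)"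
      using w_nonneg cu_pos by (intro sum_mono2) auto
    also have "\<dots> = Wsum w (mb j) * cu j powr p" unfolding Wsum_def by (simp add: sum_distrib_right)
    also have "\<dots> = 1"
    proof -
      have W: "1 \<le> Wsum w (mb j)" using Wmb[of j] by simp
      have "cu j powr p = Wsum w (mb j) powr ((-1/p) * p)" unfolding cu_def by (simp add: powr_powr)
      also have "\<dots> = Wsum w (mb j) powr (- 1)" using ppos by simp
      also have "\<dots> = inverse (Wsum w (mb j))" using W by (simp add: powr_minus)
      finally show ?thesis using W by simp
    qed
    finally show ?thesis .
  qed
  have s: "summable (\<lambda>n. w n * dec_rearr (u j) n powr p)"
    by (rule summableI_nonneg_bounded[OF _ ps]) (rule term_nonneg[OF bu])
  show ?thesis using s u0 mem_d suminf_le_const[OF s ps] unfolding Qf_def by blast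
qed

definition gam :: "nat \<Rightarrow> real" where "gam j = Sb j powr (1/p - 1) * (Sb j * cu j)"

lemma Tu: "Tm (u j) = (\<lambda>i. if i = j then gam j else 0)"
proof
  fix i
  show "Tm (u j) i = (if i = j then gam j else 0)"
  proof (cases "i = j")
    case True
    then show ?thesis unfolding Tm_def psi_def gam_def u_def Sb_def by (simp add: sum_distrib_right)
  next
    case False
    have "(\<Sum>n\<in>Rb i. w n * u j n) = 0" using Rb_disj[OF False] unfolding u_def
      by (intro sum.neutral) auto
    then show ?thesis using False unfolding Tm_def psi_def by simp
  qed
qed

lemma gam_big: "1/2 \<le> \<bar>gam j\<bar> powr p"
proof -
  define S where "S = Sb j"
  define W where "W = Wsum w (mb j)"
  have S: "0 < S" using Sb_pos[of j] S_def by simp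
  have W: "1 \<le> W" "W \<le> 2 * S" using Wmb[of j] W_def S_def by auto
  have "gam j = S powr (1/p) * W powr (-1/p)"
    unfolding gam_def cu_def S_def[symmetric] W_def[symmetric] using S
    by (simp add: powr_diff)
  also have "\<dots> = S powr (1/p) / W powr (1/p)" using W by (simp add: powr_minus divide_inverse)
  also have "\<dots> = (S / W) powr (1/p)" using S W by (simp add: powr_divide)
  finally have "\<bar>gam j\<bar> powr p = ((S / W) powr (1/p)) powr p" by simp
  also have "\<dots> = S / W" using S W ppos by (simp add: powr_powr)
  finally have e: "\<bar>gam j\<bar> powr p = S / W" .
  have "1/2 \<le> S / W" using W by (simp add: field_simps)
  then show ?thesis using e by simp
qed
lemma T_noncompact: "\<not> compact_lorentz_op w p Tm"
proof
  assume c: "compact_lorentz_op w p Tm"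
  have hyp: "(\<forall>n. u n \<in> lorentz_space w p) \<and> (\<exists>M. \<forall>n. lorentz_norm w p (u n) \<le> M)"
  proof -
    have "lorentz_norm w p (u n) \<le> 1" for n
    proof -
      have "Qf w p (u n) powr (1/p) \<le> 1 powr (1/p)"
        using u_in[of n] Qf_nonneg[of "u n"] ppos by (intro powr_mono2) auto
      then show ?thesis unfolding norm_Qf by simp
    qed
    then show ?thesis using u_in by blast
  qed
  obtain r y where r: "strict_mono r" and y: "y \<in> lorentz_space w p"
    and lim: "(\<lambda>n. lorentz_norm w p (\<lambda>k. Tm (u (r n)) k - y k)) \<longlonglongrightarrow> 0"
    using c hyp unfolding compact_lorentz_op_def by blast
  define z where "z n = (\<lambda>k. Tm (u (r n)) k - y k)" for n
  have Tin: "Tm (u j) \<in> lorentz_space w p" for j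
    using T_op u_in unfolding lorentz_op_def bdd_lin_op_def by blast
  have zin: "z n \<in> lorentz_space w p" for n unfolding z_def by (rule diff_in[OF Tin y])
  have Qz: "(\<lambda>n. Qf w p (z n)) \<longlonglongrightarrow> 0" using norm_to0_Q[OF zin] lim unfolding z_def by simp
  have y0: "y k = 0" for k
  proof -
    have "\<bar>y k\<bar> powr p \<le> Qf w p (z n)" if "n \<ge> Suc k" for n
    proof -
      have "r n \<ge> n" using r by (simp add: seq_suble)
      then have "z n k = - y k" unfolding z_def Tu using that by auto
      then show ?thesis using coord_le_Q[OF zin[of n], of k] by simp
    qed
    then have "\<bar>y k\<bar> powr p \<le> 0" by (intro LIMSEQ_le_const[OF Qz]) blast
    then show ?thesis by simp
  qed
  have "1/2 \<le> Qf w p (z n)" for n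
  proof -
    have "z n (r n) = gam (r n)" unfolding z_def Tu using y0 by simp
    then show ?thesis using coord_le_Q[OF zin[of n], of "r n"] gam_big[of "r n"] by simp
  qed
  then have "1/2 \<le> (0::real)" by (intro LIMSEQ_le_const[OF Qz]) blast
  then show False by simp
qed

end

definition tailv :: "nat \<Rightarrow> (nat \<Rightarrow> real) \<Rightarrow> nat \<Rightarrow> real" where
  "tailv N v = (\<lambda>k. if k < N then 0 else v k)"
definition truncv :: "nat \<Rightarrow> (nat \<Rightarrow> real) \<Rightarrow> nat \<Rightarrow> real" where
  "truncv N v = (\<lambda>k. if k < N then v k else 0)"

lemma tail_lim: "v \<longlonglongrightarrow> 0 \<Longrightarrow> tailv N v \<longlonglongrightarrow> 0"
proof -
  assume v: "v \<longlonglongrightarrow> 0"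
  have "eventually (\<lambda>k. v k = tailv N v k) sequentially"
    unfolding eventually_sequentially tailv_def by (intro exI[of _ N]) auto
  then show ?thesis by (rule Lim_transform_eventually[OF v])
qed

lemma trunc_lim: "truncv N v \<longlonglongrightarrow> 0"
proof (rule tendsto_eventually)
  show "\<forall>\<^sub>F k in sequentially. truncv N v k = 0"
    unfolding eventually_sequentially truncv_def by (intro exI[of _ N]) auto
qed

context wp begin

lemma tail_Q:
  assumes y: "y \<in> lorentz_space w p"
  shows "(\<lambda>N. Qf w p (tailv N y)) \<longlonglongrightarrow> 0"
proof (rule LIMSEQ_I)
  fix r :: real assume r: "0 < r"
  have y0: "y \<longlonglongrightarrow> 0" and sg: "summable (\<lambda>n. w n * dec_rearr y n powr p)" using y mem_d by auto
  have by0: "bdd y" using conv_bdd[OF y0] .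
  define g where "g = (\<lambda>n. w n * dec_rearr y n powr p)"
  have sg': "summable g" unfolding g_def using sg .
  have "(\<lambda>M. \<Sum>n<M. g n) \<longlonglongrightarrow> suminf g" using summable_LIMSEQ[OF sg'] .
  from LIMSEQ_D[OF this, of "r/2"] r obtain M where
    M: "\<forall>m\<ge>M. norm ((\<Sum>n<m. g n) - suminf g) < r/2" by auto
  have Mg: "suminf g - (\<Sum>n<M. g n) < r/2"
  proof -
    have "norm ((\<Sum>n<M. g n) - suminf g) < r/2" using M by blast
    then have "\<bar>(\<Sum>n<M. g n) - suminf g\<bar> < r/2" by simp
    then show ?thesis by linarith
  qed
  define d where "d = (r / (2 * (real M + 1))) powr (1/p)"
  have dpos: "0 < d" unfolding d_def using r by simp
  have dp: "d powr p = r / (2 * (real M + 1))" unfolding d_def using r ppos by (simp add: powr_powr)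
  obtain N0 where N0: "\<forall>k\<ge>N0. norm (y k - 0) < d" using LIMSEQ_D[OF y0 dpos] by blast
  have "Qf w p (tailv N y) < r" if N: "N \<ge> N0" for N
  proof -
    define t where "t = tailv N y"
    have t0: "t \<longlonglongrightarrow> 0" unfolding t_def by (rule tail_lim[OF y0])
    have bt: "bdd t" using conv_bdd[OF t0] .
    have tle: "\<forall>k. \<bar>t k\<bar> \<le> \<bar>y k\<bar>" unfolding t_def tailv_def by auto
    have tin: "t \<in> lorentz_space w p" using Q_mono[OF y t0 tle] by simp
    define f where "f = (\<lambda>n. w n * dec_rearr t n powr p)"
    have sf: "summable f" using tin mem_d f_def by simp
    have fg: "f n \<le> g n" for n unfolding f_def g_def
      using dr_mono[OF tle by0, of n] dr_nonneg[OF bt, of n] w_nonneg ppos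
      by (intro mult_left_mono powr_mono2) auto
    have f0: "0 \<le> f n" for n unfolding f_def using term_nonneg[OF bt] .
    have td: "dec_rearr t n \<le> d" for n
      using dpos N0 N by (intro dr_bound) (auto simp: t_def tailv_def less_imp_le)
    have fd: "f n \<le> d powr p" for n
    proof -
      have "f n \<le> 1 * dec_rearr t n powr p" unfolding f_def
        using w_le1 dr_nonneg[OF bt] by (intro mult_right_mono) auto
      also have "\<dots> \<le> d powr p" using td[of n] dr_nonneg[OF bt] ppos by (simp add: powr_mono2)
      finally show ?thesis .
    qed
    have "Qf w p t = (\<Sum>n. f (n + M)) + (\<Sum>n<M. f n)" unfolding Qf_def f_def[symmetric]
      using suminf_split_initial_segment[OF sf] .
    also have "(\<Sum>n. f (n + M)) \<le> (\<Sum>n. g (n + M))"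
      using fg by (intro suminf_le) (auto intro: summable_ignore_initial_segment sf sg')
    also have "(\<Sum>n. g (n + M)) = suminf g - (\<Sum>n<M. g n)" using suminf_minus_initial_segment[OF sg'] .
    also have "(\<Sum>n<M. f n) \<le> (\<Sum>n<M. d powr p)" by (intro sum_mono fd)
    also have "(\<Sum>n<M. d powr p) = real M * (r / (2 * (real M + 1)))" using dp by simp
    also have "\<dots> \<le> r/2" using r by (simp add: field_simps)
    finally have "Qf w p t < r" using Mg by linarith
    then show ?thesis unfolding t_def .
  qed
  moreover have "0 \<le> Qf w p (tailv N y)" for N
    using Q_mono[OF y tail_lim[OF y0], of N] Qf_nonneg by (auto simp: tailv_def)
  ultimately show "\<exists>N0. \<forall>N\<ge>N0. norm (Qf w p (tailv N y) - 0) < r" by auto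
qed

end

context wp begin

lemma norm_nonneg_l: "0 \<le> lorentz_norm w p x" unfolding norm_Qf by simp

lemma unit_ne: "{x \<in> lorentz_space w p. lorentz_norm w p x \<le> 1} \<noteq> {}"
  using Qf_zero by (intro ex_in_conv[THEN iffD1] exI[of _ "\<lambda>k. 0"]) (simp add: norm_Qf)

lemma compact_approx:
  assumes c: "compact_lorentz_op w p T" and e: "0 < e"
  shows "\<exists>N. \<forall>x\<in>lorentz_space w p. lorentz_norm w p x \<le> 1 \<longrightarrow> lorentz_norm w p (tailv N (T x)) \<le> e/2"
proof (rule ccontr)
  assume "\<not> ?thesis"
  then have "\<forall>N. \<exists>x. x \<in> lorentz_space w p \<and> lorentz_norm w p x \<le> 1 \<and> e/2 < lorentz_norm w p (tailv N (T x))"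
    by (auto simp: not_le)
  then have "\<exists>xs. \<forall>N. xs N \<in> lorentz_space w p \<and> lorentz_norm w p (xs N) \<le> 1 \<and> e/2 < lorentz_norm w p (tailv N (T (xs N)))"
    by (rule choice)
  then obtain xs where xsa: "\<forall>N. xs N \<in> lorentz_space w p \<and> lorentz_norm w p (xs N) \<le> 1 \<and> e/2 < lorentz_norm w p (tailv N (T (xs N)))"
    by blast
  have xs: "\<And>N. xs N \<in> lorentz_space w p" "\<And>N. lorentz_norm w p (xs N) \<le> 1"
    "\<And>N. e/2 < lorentz_norm w p (tailv N (T (xs N)))" using xsa by auto
  have Tin: "\<And>x. x \<in> lorentz_space w p \<Longrightarrow> T x \<in> lorentz_space w p"
    using c unfolding compact_lorentz_op_def lorentz_op_def bdd_lin_op_def by blast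
  obtain r y where r: "strict_mono r" and y: "y \<in> lorentz_space w p"
    and lim: "(\<lambda>n. lorentz_norm w p (\<lambda>k. T (xs (r n)) k - y k)) \<longlonglongrightarrow> 0"
    using c xs unfolding compact_lorentz_op_def by blast
  have y0: "y \<longlonglongrightarrow> 0" using y mem_d by simp
  define dn where "dn n = (\<lambda>k. T (xs (r n)) k - y k)" for n
  have dnin: "dn n \<in> lorentz_space w p" for n unfolding dn_def by (rule diff_in[OF Tin[OF xs(1)] y])
  have Qdn: "(\<lambda>n. Qf w p (dn n)) \<longlonglongrightarrow> 0" using norm_to0_Q[OF dnin] lim unfolding dn_def by simp
  define a where "a n = tailv (r n) (dn n)" for n
  define b where "b n = tailv (r n) y" for n
  define cc where "cc n = tailv (r n) (T (xs (r n)))" for n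
  have ain: "a n \<in> lorentz_space w p \<and> Qf w p (a n) \<le> Qf w p (dn n)" for n
  proof -
    have "tailv (r n) (dn n) \<longlonglongrightarrow> 0" using dnin[of n] mem_d by (intro tail_lim) auto
    moreover have "\<forall>k. \<bar>tailv (r n) (dn n) k\<bar> \<le> \<bar>dn n k\<bar>" by (simp add: tailv_def)
    ultimately show ?thesis unfolding a_def using Q_mono[OF dnin[of n]] by blast
  qed
  have bin: "b n \<in> lorentz_space w p" for n
  proof -
    have "\<forall>k. \<bar>tailv (r n) y k\<bar> \<le> \<bar>y k\<bar>" by (simp add: tailv_def)
    then show ?thesis unfolding b_def using Q_mono[OF y tail_lim[OF y0]] by blast
  qed
  have Qa: "(\<lambda>n. Qf w p (a n)) \<longlonglongrightarrow> 0"
    by (rule real_tendsto_sandwich[OF _ _ tendsto_const Qdn]) (use ain Qf_nonneg in auto)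
  have Qb: "(\<lambda>n. Qf w p (b n)) \<longlonglongrightarrow> 0"
    using LIMSEQ_subseq_LIMSEQ[OF tail_Q[OF y] r] unfolding b_def by (simp add: o_def)
  have ccq: "cc n \<in> lorentz_space w p \<and> Qf w p (cc n) \<le> 2 * 2 powr p * (Qf w p (a n) + Qf w p (b n))" for n
  proof (rule Q_quasi[OF conjunct1[OF ain] bin])
    show "cc n \<longlonglongrightarrow> 0" unfolding cc_def using Tin[OF xs(1)] mem_d by (intro tail_lim) auto
    show "\<forall>k. \<bar>cc n k\<bar> \<le> \<bar>a n k\<bar> + \<bar>b n k\<bar>"
      unfolding cc_def a_def b_def dn_def tailv_def by auto
  qed
  have lim2: "(\<lambda>n. 2 * 2 powr p * (Qf w p (a n) + Qf w p (b n))) \<longlonglongrightarrow> 2 * 2 powr p * (0 + 0)"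
    by (intro tendsto_mult tendsto_add Qa Qb tendsto_const)
  then have lim3: "(\<lambda>n. 2 * 2 powr p * (Qf w p (a n) + Qf w p (b n))) \<longlonglongrightarrow> 0"
    by (simp only: add_0 mult_zero_right)
  have Qc: "(\<lambda>n. Qf w p (cc n)) \<longlonglongrightarrow> 0"
    by (rule real_tendsto_sandwich[OF _ _ tendsto_const lim3]) (use ccq Qf_nonneg in auto)
  have nc: "(\<lambda>n. lorentz_norm w p (cc n)) \<longlonglongrightarrow> 0" using Q_to0_norm[OF _ Qc] ccq by blast
  have "e/2 \<le> lorentz_norm w p (cc n)" for n unfolding cc_def using xs(3)[of "r n"] by simp
  then have "e/2 \<le> (0::real)" by (intro LIMSEQ_le_const[OF nc]) blast
  then show False using e by simp
qed


lemma compact_closure: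
  assumes c: "compact_lorentz_op w p T"
  shows "in_closure_J_lp w p T"
proof -
  have Top: "lorentz_op w p T" using c unfolding compact_lorentz_op_def by simp
  have Tin: "\<And>x. x \<in> lorentz_space w p \<Longrightarrow> T x \<in> lorentz_space w p"
    and Tadd: "\<And>x y. x \<in> lorentz_space w p \<Longrightarrow> y \<in> lorentz_space w p \<Longrightarrow> T (\<lambda>n. x n + y n) = (\<lambda>n. T x n + T y n)"
    and Tsm: "\<And>x c. x \<in> lorentz_space w p \<Longrightarrow> T (\<lambda>n. c * x n) = (\<lambda>n. c * T x n)"
    using Top unfolding lorentz_op_def bdd_lin_op_def by blast+
  obtain C0 where C0: "\<And>x. x \<in> lorentz_space w p \<Longrightarrow> lorentz_norm w p (T x) \<le> C0 * lorentz_norm w p x"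
    using Top unfolding lorentz_op_def bdd_lin_op_def by blast
  define C where "C = max C0 0"
  have C: "\<And>x. x \<in> lorentz_space w p \<Longrightarrow> lorentz_norm w p (T x) \<le> C * lorentz_norm w p x" "0 \<le> C"
  proof -
    fix x assume "x \<in> lorentz_space w p"
    then show "lorentz_norm w p (T x) \<le> C * lorentz_norm w p x"
      using C0 norm_nonneg_l[of x] unfolding C_def by (meson max.cobounded1 mult_right_mono order_trans)
  qed (simp add: C_def)
  show ?thesis unfolding in_closure_J_lp_def
  proof (intro conjI Top allI impI)
    fix e :: real assume e: "0 < e"
    obtain N where N: "\<forall>x\<in>lorentz_space w p. lorentz_norm w p x \<le> 1 \<longrightarrow> lorentz_norm w p (tailv N (T x)) \<le> e/2"
      using compact_approx[OF c e] by blast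
    define S where "S x = truncv N (T x)" for x
    have Sin: "S x \<in> lorentz_space w p \<and> Qf w p (S x) \<le> Qf w p (T x)" if x: "x \<in> lorentz_space w p" for x
      unfolding S_def by (rule Q_mono[OF Tin[OF x] trunc_lim]) (auto simp: truncv_def)
    have Snorm: "lorentz_norm w p (S x) \<le> lorentz_norm w p (T x)" if x: "x \<in> lorentz_space w p" for x
      using norm_from_Q[of "S x" 1 "T x"] Sin[OF x] Qf_nonneg Tin[OF x] by simp
    have Sadd: "S (\<lambda>n. x n + y n) = (\<lambda>n. S x n + S y n)"
      if "x \<in> lorentz_space w p" "y \<in> lorentz_space w p" for x y
      unfolding S_def Tadd[OF that] truncv_def by auto
    have Ssm: "S (\<lambda>n. c * x n) = (\<lambda>n. c * S x n)" if "x \<in> lorentz_space w p" for x c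
      unfolding S_def Tsm[OF that] truncv_def by auto
    have Sop: "lorentz_op w p S" unfolding lorentz_op_def bdd_lin_op_def
    proof (intro conjI ballI allI exI[of _ C])
      show "S x \<in> lorentz_space w p" if "x \<in> lorentz_space w p" for x using Sin[OF that] by simp
      show "lorentz_norm w p (S x) \<le> C * lorentz_norm w p x" if "x \<in> lorentz_space w p" for x
        using Snorm[OF that] C(1)[OF that] by simp
    qed (auto simp: Sadd Ssm)
    have Slp: "S x \<in> lp_space p \<and> lp_norm p (S x) \<le> (real N powr (1/p) * C) * lorentz_norm w p x"
      if x: "x \<in> lorentz_space w p" for x
    proof -
      have z: "\<And>k. k \<notin> {..<N} \<Longrightarrow> \<bar>S x k\<bar> powr p = 0" unfolding S_def truncv_def by auto
      have s: "summable (\<lambda>k. \<bar>S x k\<bar> powr p)" using summable_finite[of "{..<N}" "\<lambda>k. \<bar>S x k\<bar> powr p"] z by blast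
      have "(\<Sum>k. \<bar>S x k\<bar> powr p) = (\<Sum>k<N. \<bar>S x k\<bar> powr p)" using suminf_finite[of "{..<N}" "\<lambda>k. \<bar>S x k\<bar> powr p"] z by blast
      also have "\<dots> \<le> (\<Sum>k<N. Qf w p (T x))"
        using coord_le_Q[OF Tin[OF x]] unfolding S_def truncv_def by (intro sum_mono) auto
      also have "\<dots> = real N * Qf w p (T x)" by simp
      finally have le: "(\<Sum>k. \<bar>S x k\<bar> powr p) \<le> real N * Qf w p (T x)" .
      have "lp_norm p (S x) \<le> (real N * Qf w p (T x)) powr (1/p)" unfolding lp_norm_def
        using le ppos s by (intro powr_mono2) (auto intro: suminf_nonneg)
      also have "\<dots> = real N powr (1/p) * lorentz_norm w p (T x)"
        unfolding norm_Qf using Qf_nonneg[OF Tin[OF x]] by (simp add: powr_mult)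
      also have "\<dots> \<le> real N powr (1/p) * (C * lorentz_norm w p x)"
        using C(1)[OF x] by (intro mult_left_mono) auto
      finally show ?thesis using s unfolding lp_space_def by (simp add: mult.assoc)
    qed
    have Aop: "bdd_lin_op (lorentz_space w p) (lorentz_norm w p) (lp_space p) (lp_norm p) S"
      unfolding bdd_lin_op_def using Slp Sadd Ssm by blast
    have Sf: "factors_through_lp w p S"
      unfolding factors_through_lp_def using Sop Aop id_op by blast
    have eq: "(\<lambda>x n. T x n - S x n) = (\<lambda>x. tailv N (T x))"
      unfolding S_def tailv_def truncv_def by (auto simp: fun_eq_iff)
    have "lorentz_opnorm w p (\<lambda>x n. T x n - S x n) \<le> e/2"
      unfolding eq lorentz_opnorm_def by (rule cSUP_least[OF unit_ne]) (use N in auto)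
    then have "lorentz_opnorm w p (\<lambda>x n. T x n - S x n) < e" using e by simp
    then show "\<exists>S. factors_through_lp w p S \<and> lorentz_opnorm w p (\<lambda>x n. T x n - S x n) < e"
      using Sf by blast
  qed
qed

end

theorem corollary2p5:
  fixes w :: "nat \<Rightarrow> real" and p :: real
  assumes "1 \<le> p"
    and "w 0 = 1"
    and "decseq w"
    and "w \<longlonglongrightarrow> 0"
    and "\<not> summable w"
  shows "(\<forall>T. compact_lorentz_op w p T \<longrightarrow> in_closure_J_lp w p T) \<and>
         (\<exists>T. in_closure_J_lp w p T \<and> \<not> compact_lorentz_op w p T)"
proof -
  interpret wps w p using assms by unfold_locales auto
  show ?thesis using compact_closure T_closure T_noncompact by blast
qed

end
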